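(* Let $\Omega\subset\mathbb{R}^{+}$ be measurable and $\nu\ge0$. Then $\Omega$ is $\mu_\nu$-thick if and only if $\Omega$ is thick.
   Context: Let $d\mu_\nu(y)=y^{2\nu+1}dy$ on $\mathbb{R}^{+}$. A measurable $\Omega\subset\mathbb{R}^{+}$ is $\mu_\nu$-thick if there exist $r>0$, $L>0$ with $\mu_\nu(\Omega\cap[x,x+L])\ge r\,\mu_\nu([x,x+L])$ for all $x\ge0$. It is thick if there exist $\gamma>0$, $L>0$ with $|\Omega\cap[x,x+L]|\ge\gamma L$ for all $x\ge0$ ($|\cdot|$ = Lebesgue measure). *)

theory Defs
  imports "HOL-Analysis.Analysis"
begin

(* d mu_nu(y) = y^(2 nu + 1) dy on R^+ = [0, infinity) *)
definition mu_nu :: "real \<Rightarrow> real set \<Rightarrow> ennreal" where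
  "mu_nu \<nu> A = (\<integral>\<^sup>+ y. ennreal (indicator ({0..} \<inter> A) y * y powr (2 * \<nu> + 1)) \<partial>lebesgue)"

definition mu_thick :: "real \<Rightarrow> real set \<Rightarrow> bool" where
  "mu_thick \<nu> \<Omega> \<longleftrightarrow> (\<exists>r>0. \<exists>L>0. \<forall>x\<ge>0.
      mu_nu \<nu> (\<Omega> \<inter> {x..x+L}) \<ge> ennreal r * mu_nu \<nu> {x..x+L})"

definition thick :: "real set \<Rightarrow> bool" where
  "thick \<Omega> \<longleftrightarrow> (\<exists>\<gamma>>0. \<exists>L>0. \<forall>x\<ge>0.
      emeasure lebesgue (\<Omega> \<inter> {x..x+L}) \<ge> ennreal (\<gamma> * L))"

end

theory Submission imports Defs begin

lemma mu_lower:
  assumes S: "S \<in> sets lebesgue" "S \<subseteq> {a..b}" and a: "0 \<le> a" and nu: "\<nu> \<ge> 0"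
  shows "ennreal (a powr (2*\<nu>+1)) * emeasure lebesgue S \<le> mu_nu \<nu> S"
proof -
  have "ennreal (a powr (2*\<nu>+1)) * emeasure lebesgue S = (\<integral>\<^sup>+ y. ennreal (a powr (2*\<nu>+1)) * indicator S y \<partial>lebesgue)"
    using S by (simp add: nn_integral_cmult_indicator)
  also have "\<dots> \<le> mu_nu \<nu> S"
    unfolding mu_nu_def
  proof (rule nn_integral_mono)
    fix y show "ennreal (a powr (2*\<nu>+1)) * indicator S y \<le> ennreal (indicator ({0..} \<inter> S) y * y powr (2 * \<nu> + 1))"
    proof (cases "y \<in> S")
      case True
      then have "y \<ge> a" "y \<ge> 0" using S a by auto
      then have "a powr (2*\<nu>+1) \<le> y powr (2*\<nu>+1)" using a nu by (intro powr_mono2) auto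
      then show ?thesis using True \<open>y \<ge> 0\<close> by (simp add: indicator_def)
    qed (simp add: indicator_def)
  qed
  finally show ?thesis .
qed

lemma mu_upper:
  assumes S: "S \<in> sets lebesgue" "S \<subseteq> {a..b}" and a: "0 \<le> a" and nu: "\<nu> \<ge> 0"
  shows "mu_nu \<nu> S \<le> ennreal (b powr (2*\<nu>+1)) * emeasure lebesgue S"
proof -
  have "mu_nu \<nu> S \<le> (\<integral>\<^sup>+ y. ennreal (b powr (2*\<nu>+1)) * indicator S y \<partial>lebesgue)"
    unfolding mu_nu_def
  proof (rule nn_integral_mono)
    fix y show "ennreal (indicator ({0..} \<inter> S) y * y powr (2 * \<nu> + 1)) \<le> ennreal (b powr (2*\<nu>+1)) * indicator S y"
    proof (cases "y \<in> S")
      case True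
      then have "y \<le> b" "y \<ge> 0" using S a by auto
      then have "y powr (2*\<nu>+1) \<le> b powr (2*\<nu>+1)" using a nu by (intro powr_mono2) auto
      then show ?thesis using True \<open>y \<ge> 0\<close> by (simp add: indicator_def)
    qed (simp add: indicator_def)
  qed
  also have "\<dots> = ennreal (b powr (2*\<nu>+1)) * emeasure lebesgue S"
    using S by (simp add: nn_integral_cmult_indicator)
  finally show ?thesis .
qed

lemma mu_mono:
  assumes "A \<subseteq> B" shows "mu_nu \<nu> A \<le> mu_nu \<nu> B"
  unfolding mu_nu_def
  by (rule nn_integral_mono) (use assms in \<open>auto simp: indicator_def intro!: ennreal_leI\<close>)

lemma emeasure_fin:
  fixes x L :: real
  assumes "S \<in> sets lebesgue" "S \<subseteq> {x..x+L}" "0 \<le> L"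
  shows "emeasure lebesgue S = ennreal (measure lebesgue S)"
proof -
  have "emeasure lebesgue S \<le> emeasure lebesgue {x..x+L}"
  proof (rule emeasure_mono)
    show "{x..x+L} \<in> sets lebesgue" by simp
  qed (use assms in auto)
  also have "\<dots> = ennreal L" using assms(3) by simp
  finally have "emeasure lebesgue S \<noteq> \<infinity>" by (auto simp: top_unique)
  then show ?thesis by (simp add: emeasure_eq_ennreal_measure)
qed

theorem lemma3p7:
  fixes \<Omega> :: "real set" and \<nu> :: real
  assumes "\<Omega> \<subseteq> {0..}" and "\<Omega> \<in> sets lebesgue" and "\<nu> \<ge> 0"
  shows "mu_thick \<nu> \<Omega> \<longleftrightarrow> thick \<Omega>"
proof
  define p where "p = 2*\<nu>+1"
  have p: "p \<ge> 0" using assms(3) by (simp add: p_def)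
  assume "mu_thick \<nu> \<Omega>"
  then obtain r L where r: "r > 0" and L: "L > 0" and H: "\<And>x. x \<ge> 0 \<Longrightarrow>
      mu_nu \<nu> (\<Omega> \<inter> {x..x+L}) \<ge> ennreal r * mu_nu \<nu> {x..x+L}"
    unfolding mu_thick_def by blast
  define g where "g = r * (1/2) powr p / 2"
  have g: "g > 0" using r by (simp add: g_def)
  show "thick \<Omega>" unfolding thick_def
  proof (rule exI[of _ g], intro conjI allI impI g exI[of _ L] L)
    fix x :: real assume x: "x \<ge> 0"
    define m where "m = measure lebesgue (\<Omega> \<inter> {x..x+L})"
    have OI: "\<Omega> \<inter> {x..x+L} \<in> sets lebesgue" using assms(2) by auto
    have em: "emeasure lebesgue (\<Omega> \<inter> {x..x+L}) = ennreal m"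
      unfolding m_def by (rule emeasure_fin[OF OI]) (use L in auto)
    have m0: "m \<ge> 0" by (simp add: m_def)
    have "ennreal r * mu_nu \<nu> {x..x+L} \<le> mu_nu \<nu> (\<Omega> \<inter> {x..x+L})" using H x by blast
    also have "\<dots> \<le> ennreal ((x+L) powr p) * emeasure lebesgue (\<Omega> \<inter> {x..x+L})"
      unfolding p_def by (rule mu_upper[OF OI _ x assms(3)]) auto
    also have "\<dots> = ennreal ((x+L) powr p * m)" using em m0 by (simp add: ennreal_mult)
    finally have A: "ennreal r * mu_nu \<nu> {x..x+L} \<le> ennreal ((x+L) powr p * m)" .
    have "ennreal ((x+L/2) powr p) * emeasure lebesgue {x+L/2..x+L} \<le> mu_nu \<nu> {x+L/2..x+L}"
      unfolding p_def by (rule mu_lower[OF _ _ _ assms(3)]) (use x L in auto)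
    also have "\<dots> \<le> mu_nu \<nu> {x..x+L}" by (rule mu_mono) (use L in auto)
    finally have B: "ennreal ((x+L/2) powr p * (L/2)) \<le> mu_nu \<nu> {x..x+L}"
      using L x by (simp add: ennreal_mult[symmetric])
    have "ennreal (r * ((x+L/2) powr p * (L/2))) = ennreal r * ennreal ((x+L/2) powr p * (L/2))"
      using r L x by (subst ennreal_mult[symmetric]) auto
    also have "\<dots> \<le> ennreal r * mu_nu \<nu> {x..x+L}" by (rule mult_left_mono[OF B]) simp
    finally have "ennreal (r * ((x+L/2) powr p * (L/2))) \<le> ennreal r * mu_nu \<nu> {x..x+L}" .
    with A have "ennreal (r * ((x+L/2) powr p * (L/2))) \<le> ennreal ((x+L) powr p * m)"
      by order
    then have C: "r * ((x+L/2) powr p * (L/2)) \<le> (x+L) powr p * m"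
      using m0 x L by (subst (asm) ennreal_le_iff) auto
    have "(1/2) powr p * (x+L) powr p = ((x+L)/2) powr p"
      using x L by (simp add: powr_mult[symmetric])
    also have "\<dots> \<le> (x+L/2) powr p" using x L p by (intro powr_mono2) auto
    finally have D: "(1/2) powr p * (x+L) powr p \<le> (x+L/2) powr p" .
    have "g * L * (x+L) powr p = r * (L/2) * ((1/2) powr p * (x+L) powr p)"
      by (simp add: g_def algebra_simps)
    also have "\<dots> \<le> r * (L/2) * (x+L/2) powr p"
      using D r L by (intro mult_left_mono) auto
    also have "\<dots> \<le> m * (x+L) powr p" using C by (simp add: algebra_simps)
    finally have "g * L * (x+L) powr p \<le> m * (x+L) powr p" .
    moreover have "(x+L) powr p > 0" using x L by simp
    ultimately have "g * L \<le> m" by simp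
    then show "ennreal (g * L) \<le> emeasure lebesgue (\<Omega> \<inter> {x..x+L})"
      using em by (simp add: ennreal_leI)
  qed
next
  define p where "p = 2*\<nu>+1"
  have p: "p \<ge> 0" using assms(3) by (simp add: p_def)
  assume "thick \<Omega>"
  then obtain \<gamma> L where \<gamma>: "\<gamma> > 0" and L: "L > 0" and H: "\<And>x. x \<ge> 0 \<Longrightarrow>
      emeasure lebesgue (\<Omega> \<inter> {x..x+L}) \<ge> ennreal (\<gamma> * L)"
    unfolding thick_def by blast
  define g where "g = min \<gamma> 1"
  have g: "g > 0" "g \<le> 1" "g \<le> \<gamma>" using \<gamma> by (auto simp: g_def)
  define r where "r = (g/2) * (g/2) powr p"
  have r: "r > 0" using g by (simp add: r_def)
  show "mu_thick \<nu> \<Omega>" unfolding mu_thick_def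
  proof (rule exI[of _ r], intro conjI allI impI r exI[of _ L] L)
    fix x :: real assume x: "x \<ge> 0"
    define a where "a = x + g*L/2"
    have a: "a \<ge> x" "a \<le> x + L" using g L by (auto simp: a_def)
    define S where "S = \<Omega> \<inter> {a..x+L}"
    have Sm: "S \<in> sets lebesgue" using assms(2) by (auto simp: S_def)
    have OI: "\<Omega> \<inter> {x..x+L} \<in> sets lebesgue" using assms(2) by auto
    have es: "emeasure lebesgue S = ennreal (measure lebesgue S)"
      by (rule emeasure_fin[OF Sm, of x L]) (use a L in \<open>auto simp: S_def\<close>)
    have "ennreal (g * L) \<le> ennreal (\<gamma> * L)" using g L by (intro ennreal_leI) auto
    also have "\<dots> \<le> emeasure lebesgue (\<Omega> \<inter> {x..x+L})" using H x by blast
    also have "\<dots> \<le> emeasure lebesgue (S \<union> {x..a})"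
    proof (rule emeasure_mono)
      show "S \<union> {x..a} \<in> sets lebesgue" using Sm by (intro sets.Un) auto
    qed (auto simp: S_def)
    also have "\<dots> \<le> emeasure lebesgue S + emeasure lebesgue {x..a}"
      using Sm by (intro emeasure_subadditive) auto
    also have "\<dots> = ennreal (measure lebesgue S + g*L/2)"
      using es a by (simp add: a_def ennreal_plus)
    finally have "g * L \<le> measure lebesgue S + g*L/2"
      using g L by (subst (asm) ennreal_le_iff) auto
    then have s: "g*L/2 \<le> measure lebesgue S" by simp
    have "ennreal (a powr p * (g*L/2)) = ennreal (a powr p) * ennreal (g*L/2)"
      using g L by (subst ennreal_mult[symmetric]) auto
    also have "\<dots> \<le> ennreal (a powr p) * emeasure lebesgue S"
      unfolding es by (intro mult_left_mono ennreal_leI s) simp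
    also have "\<dots> \<le> mu_nu \<nu> S"
      unfolding p_def by (rule mu_lower[OF Sm _ _ assms(3)]) (use x a in \<open>auto simp: S_def\<close>)
    also have "\<dots> \<le> mu_nu \<nu> (\<Omega> \<inter> {x..x+L})" by (rule mu_mono) (use a in \<open>auto simp: S_def\<close>)
    finally have A: "ennreal (a powr p * (g*L/2)) \<le> mu_nu \<nu> (\<Omega> \<inter> {x..x+L})" .
    have "mu_nu \<nu> {x..x+L} \<le> ennreal ((x+L) powr p) * emeasure lebesgue {x..x+L}"
      unfolding p_def by (rule mu_upper[OF _ _ x assms(3)]) auto
    also have "\<dots> = ennreal ((x+L) powr p * L)" using L by (simp add: ennreal_mult)
    finally have B0: "mu_nu \<nu> {x..x+L} \<le> ennreal ((x+L) powr p * L)" .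
    have "ennreal r * mu_nu \<nu> {x..x+L} \<le> ennreal r * ennreal ((x+L) powr p * L)"
      by (rule mult_left_mono[OF B0]) simp
    also have "\<dots> = ennreal (r * ((x+L) powr p * L))"
      using r L x by (subst ennreal_mult[symmetric]) auto
    finally have B: "ennreal r * mu_nu \<nu> {x..x+L} \<le> ennreal (r * ((x+L) powr p * L))" .
    have "(g/2) powr p * (x+L) powr p = (g/2*(x+L)) powr p"
      using x L g by (simp add: powr_mult[symmetric])
    also have "\<dots> \<le> a powr p"
    proof (intro powr_mono2)
      have "g * x \<le> 1 * x" using g x by (intro mult_right_mono) auto
      then show "g/2*(x+L) \<le> a" using x by (simp add: a_def algebra_simps)
    qed (use x L g p in auto)
    finally have D: "(g/2) powr p * (x+L) powr p \<le> a powr p" .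
    have "r * ((x+L) powr p * L) = (g/2) * L * ((g/2) powr p * (x+L) powr p)"
      by (simp add: r_def algebra_simps)
    also have "\<dots> \<le> (g/2) * L * a powr p" using D g L by (intro mult_left_mono) auto
    also have "\<dots> = a powr p * (g*L/2)" by simp
    finally have "ennreal (r * ((x+L) powr p * L)) \<le> ennreal (a powr p * (g*L/2))"
      by (rule ennreal_leI)
    with A B show "ennreal r * mu_nu \<nu> {x..x+L} \<le> mu_nu \<nu> (\<Omega> \<inter> {x..x+L})" by order
  qed
qed

end
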